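(* Let $\mathcal D=\{1,\dots,N\}$, $\boldsymbol\psi_1,\dots,\boldsymbol\psi_N\in\mathbb R^p$, $\mathbf H$ an invertible symmetric $p\times p$ matrix, $n>0$, and consider the family of PO-WR, PO-WOR or MULTI designs with domain $\mathcal M_n$ and $\boldsymbol\Gamma(\boldsymbol\mu)$ as in the context. Let $\Phi:\mathbf S_+^{p\times p}\to\mathbb R$ be monotone for Loewner's ordering and differentiable in its matrix argument with matrix derivative $\boldsymbol\phi$, and assume $\boldsymbol\mu\mapsto\Phi(\boldsymbol\Gamma(\boldsymbol\mu))$ is differentiable in a neighbourhood of $\boldsymbol\mu^*\in\mathcal M_n$. Let $\mathbf L(\boldsymbol\mu^* )$ satisfy $\mathbf L(\boldsymbol\mu^* )\mathbf L(\boldsymbol\mu^* )^{\mathsf T}=\boldsymbol\phi(\boldsymbol\Gamma(\boldsymbol\mu^* ))$ and set $c_i=\|\mathbf L(\boldsymbol\mu^* )^{\mathsf T}\mathbf H^{-1}\boldsymbol\psi_i\|_2^2$, $i\in\mathcal D$. Then: (a) For PO-WR or MULTI, $\boldsymbol\mu^*$ is a stationary point of $\Phi(\boldsymbol\Gamma(\boldsymbol\mu))$ subject to $\boldsymbol\mu\in\mathcal M_n$ (i.e. satisfies the Lagrange conditions for the constraint $\sum_i\mu_i=n$) if $\mu_i^*=n\sqrt{c_i}/\sum_{j\in\mathcal D}\sqrt{c_j}$ for all $i\in\mathcal D$. (b) For PO-WOR, $\boldsymbol\mu^*$ is a stationary point of $\Phi(\boldsymbol\Gamma(\boldsymbol\mu))$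 subject to $\sum_i\mu_i=n$, $\mu_i\le1$ (i.e. satisfies the Karush–Kuhn–Tucker conditions) if, with $\mathcal E=\{i\in\mathcal D:\mu_i^*=1\}$ and $n_{\mathcal E}=|\mathcal E|$: $\mu_i^*\le1$ for all $i\in\mathcal D$; $\mu_i^*=(n-n_{\mathcal E})\sqrt{c_i}/\sum_{j\in\mathcal D\setminus\mathcal E}\sqrt{c_j}$ for all $i\in\mathcal D\setminus\mathcal E$; and $\sqrt{c_i}\ge\sqrt{c_j}/\mu_j^*$ for all $i\in\mathcal E$, $j\in\mathcal D\setminus\mathcal E$. Consequently, if $\boldsymbol\mu^*$ satisfies the condition in (a) or (b) and $\boldsymbol\mu\mapsto\Phi(\boldsymbol\Gamma(\boldsymbol\mu))$ is convex on $\mathcal M_n$, then $\boldsymbol\mu^*$ is a global minimiser of $\Phi(\boldsymbol\Gamma(\boldsymbol\mu))$ over $\mathcal M_n$.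
   Context: Sampling designs (size parameter $n>0$, scheme $\boldsymbol\mu=(\mu_1,\dots,\mu_N)$): PO-WR: $S_i$ independent $\mathrm{Poisson}(\mu_i)$; MULTI: $(S_1,\dots,S_N)\sim\mathrm{Multinomial}(n,\boldsymbol\mu/n)$; for both, $\mathcal M_n=\{\boldsymbol\mu\in\mathbb R^N:\mu_i>0\ \forall i,\ \sum_i\mu_i=n\}$. PO-WOR: $S_i$ independent $\mathrm{Bernoulli}(\mu_i)$, $\mathcal M_n=\{\boldsymbol\mu:\mu_i\in(0,1]\ \forall i,\ \sum_i\mu_i=n\}$. Define $\mathbf V(\boldsymbol\mu)=\sum_{i\in\mathcal D}\mu_i^{-1}\boldsymbol\psi_i\boldsymbol\psi_i^{\mathsf T}$ for PO-WR and MULTI, $\mathbf V(\boldsymbol\mu)=\sum_{i\in\mathcal D}(\mu_i^{-1}-1)\boldsymbol\psi_i\boldsymbol\psi_i^{\mathsf T}$ for PO-WOR, and $\boldsymbol\Gamma(\boldsymbol\mu)=\mathbf H^{-1}\mathbf V(\boldsymbol\mu)\mathbf H^{-1}$. $\mathbf S_+^{p\times p}$: real symmetric positive semi-definite $p\times p$ matrices. $\Phi$ is monotone for Loewner's ordering if $\Phi(\mathbf U)\ge\Phi(\mathbf W)$ whenever $\mathbf U-\mathbf W$ is positive semi-definite. *)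

theory Defs
  imports "HOL-Analysis.Analysis"
begin

datatype design = PO_WR | MULTI | PO_WOR

definition psd :: "real^'p^'p \<Rightarrow> bool" where
  "psd A \<longleftrightarrow> transpose A = A \<and> (\<forall>x. 0 \<le> x \<bullet> (A *v x))"

definition outer :: "real^'p \<Rightarrow> real^'p^'p" where
  "outer x = (\<chi> k l. x $ k * x $ l)"

text \<open>Domain M_n of admissible schemes mu (indexed by the finite population type 'd).\<close>
definition M_dom :: "design \<Rightarrow> real \<Rightarrow> (real^'d) set" where
  "M_dom d n = {\<mu>. (\<forall>i. 0 < \<mu> $ i \<and> (d = PO_WOR \<longrightarrow> \<mu> $ i \<le> 1)) \<and> (\<Sum>i\<in>UNIV. \<mu> $ i) = n}"

definition Vmat :: "design \<Rightarrow> ('d \<Rightarrow> real^'p) \<Rightarrow> real^'d \<Rightarrow> real^'p^'p" where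
  "Vmat d \<psi> \<mu> = (if d = PO_WOR
      then (\<Sum>i\<in>UNIV. (inverse (\<mu> $ i) - 1) *\<^sub>R outer (\<psi> i))
      else (\<Sum>i\<in>UNIV. inverse (\<mu> $ i) *\<^sub>R outer (\<psi> i)))"

definition Gam :: "design \<Rightarrow> real^'p^'p \<Rightarrow> ('d \<Rightarrow> real^'p) \<Rightarrow> real^'d \<Rightarrow> real^'p^'p" where
  "Gam d H \<psi> \<mu> = matrix_inv H ** Vmat d \<psi> \<mu> ** matrix_inv H"

definition loewner_mono :: "(real^'p^'p \<Rightarrow> real) \<Rightarrow> bool" where
  "loewner_mono \<Phi> \<longleftrightarrow> (\<forall>U W. psd U \<and> psd W \<and> psd (U - W) \<longrightarrow> \<Phi> W \<le> \<Phi> U)"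

definition matrix_deriv :: "(real^'p^'p \<Rightarrow> real) \<Rightarrow> (real^'p^'p \<Rightarrow> real^'p^'p) \<Rightarrow> real^'p^'p \<Rightarrow> bool" where
  "matrix_deriv \<Phi> \<phi> U \<longleftrightarrow>
     (\<Phi> has_derivative (\<lambda>W. \<Sum>k\<in>UNIV. \<Sum>l\<in>UNIV. \<phi> U $ k $ l * W $ k $ l)) (at U within {A. psd A})"

definition lagrange_stationary :: "(real^'d \<Rightarrow> real) \<Rightarrow> real^'d \<Rightarrow> bool" where
  "lagrange_stationary f \<mu> \<longleftrightarrow>
     (\<exists>f' lam. (f has_derivative f') (at \<mu>) \<and> (\<forall>i. f' (axis i 1) + lam = 0))"

definition kkt_stationary :: "(real^'d \<Rightarrow> real) \<Rightarrow> real \<Rightarrow> real^'d \<Rightarrow> bool" where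
  "kkt_stationary f n \<mu> \<longleftrightarrow>
     (\<Sum>i\<in>UNIV. \<mu> $ i) = n \<and> (\<forall>i. \<mu> $ i \<le> 1) \<and>
     (\<exists>f' lam \<nu>. (f has_derivative f') (at \<mu>) \<and>
        (\<forall>i. 0 \<le> \<nu> i \<and> \<nu> i * (\<mu> $ i - 1) = 0 \<and> f' (axis i 1) + lam + \<nu> i = 0))"

end

theory Submission
  imports Defs
begin

lemma inv_sym:
  fixes H :: "real^'p::finite^'p"
  assumes "transpose H = H" "invertible H"
  shows "transpose (matrix_inv H) = matrix_inv H" "H ** matrix_inv H = mat 1" "matrix_inv H ** H = mat 1"
proof -
  have 1: "H ** matrix_inv H = mat 1 \<and> matrix_inv H ** H = mat 1"
    using assms(2) unfolding invertible_def matrix_inv_def by (rule someI_ex)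
  then show "H ** matrix_inv H = mat 1" "matrix_inv H ** H = mat 1" by auto
  have "H ** transpose (matrix_inv H) = mat 1"
    using 1 by (metis assms(1) matrix_transpose_mul transpose_mat)
  then have "matrix_inv H ** (H ** transpose (matrix_inv H)) = matrix_inv H" by simp
  then show "transpose (matrix_inv H) = matrix_inv H" using 1 by (simp add: matrix_mul_assoc)
qed

lemma outer_sandwich:
  fixes A :: "real^'p::finite^'p"
  assumes "transpose A = A"
  shows "A ** outer v ** A = outer (A *v v)"
proof -
  have s: "A $ r $ l = A $ l $ r" for r l using assms by (metis transpose_def vec_lambda_beta)
  show ?thesis
    unfolding outer_def matrix_matrix_mult_def matrix_vector_mult_def
    by (simp add: vec_eq_iff sum_distrib_left sum_distrib_right s mult_ac)
qed

lemma mul_sum_left: "finite I \<Longrightarrow> (A::real^'n^'m) ** (\<Sum>i\<in>I. X i) = (\<Sum>i\<in>I. A ** X i)"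
  by (induction I rule: finite_induct) (simp_all add: matrix_add_ldistrib)

lemma mat_add_rdistrib: "((B + C) ** (A::real^'n^'m)) = (B ** A) + (C ** A)"
  by (simp add: matrix_matrix_mult_def vec_eq_iff sum.distrib[symmetric] field_simps)

lemma transpose_add': "transpose (A + B) = transpose A + transpose (B::real^'n^'m)"
  by (simp add: transpose_def vec_eq_iff)

lemma mul_sum_right: "finite I \<Longrightarrow> (\<Sum>i\<in>I. X i) ** (A::real^'n^'m) = (\<Sum>i\<in>I. X i ** A)"
  by (induction I rule: finite_induct) (simp_all add: mat_add_rdistrib)

lemma mul_scale_left: "(A::real^'n^'m) ** (k *\<^sub>R X) = k *\<^sub>R (A ** X)"
  by (simp add: matrix_matrix_mult_def vec_eq_iff sum_distrib_left mult_ac)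
lemma mul_scale_right: "(k *\<^sub>R X) ** (A::real^'n^'m) = k *\<^sub>R (X ** A)"
  by (simp add: matrix_matrix_mult_def vec_eq_iff sum_distrib_left mult_ac)

definition wf :: "design \<Rightarrow> real \<Rightarrow> real" where
  "wf d x = (if d = PO_WOR then inverse x - 1 else inverse x)"

lemma Gam_eq:
  assumes "transpose (matrix_inv H) = matrix_inv H"
  shows "Gam d H \<psi> \<mu> = (\<Sum>i\<in>UNIV. wf d (\<mu>$i) *\<^sub>R outer (matrix_inv H *v \<psi> i))"
proof -
  have "Vmat d \<psi> \<mu> = (\<Sum>i\<in>UNIV. wf d (\<mu>$i) *\<^sub>R outer (\<psi> i))"
    by (simp add: Vmat_def wf_def)
  then show ?thesis
    unfolding Gam_def
    by (simp add: mul_sum_left mul_sum_right mul_scale_left mul_scale_right matrix_mul_assoc outer_sandwich[OF assms])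
qed

lemma psd_outer: "psd (outer v)"
  unfolding psd_def outer_def
proof (intro conjI allI)
  fix x :: "real^'a"
  have "x \<bullet> ((\<chi> k l. v $ k * v $ l) *v x) = (v \<bullet> x)^2"
    by (simp add: inner_vec_def matrix_vector_mult_def power2_eq_square sum_distrib_left sum_distrib_right mult_ac)
  then show "0 \<le> x \<bullet> ((\<chi> k l. v $ k * v $ l) *v x)" by simp
qed (simp add: transpose_def vec_eq_iff mult.commute)

lemma psd_scale: "psd A \<Longrightarrow> 0 \<le> k \<Longrightarrow> psd (k *\<^sub>R A)"
  unfolding psd_def
  by (auto simp: transpose_scalar matrix_vector_mult_def inner_vec_def vec_eq_iff transpose_def sum_distrib_left mult_ac simp flip: sum_distrib_left
      intro!: mult_nonneg_nonneg) 

lemma psd_add: "psd A \<Longrightarrow> psd B \<Longrightarrow> psd (A + B)"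
  unfolding psd_def by (simp add: matrix_vector_mult_add_rdistrib inner_add_right transpose_add')

lemma psd_sum: "finite I \<Longrightarrow> (\<And>i. i \<in> I \<Longrightarrow> psd (X i)) \<Longrightarrow> psd (\<Sum>i\<in>I. X i)"
  by (induction I rule: finite_induct) (auto simp: psd_add, simp add: psd_def transpose_def vec_eq_iff)

lemma wf_nonneg: "0 < x \<Longrightarrow> (d = PO_WOR \<longrightarrow> x \<le> 1) \<Longrightarrow> 0 \<le> wf d x"
  by (auto simp: wf_def one_le_inverse)

lemma psd_Gam:
  assumes "transpose (matrix_inv H) = matrix_inv H" "\<And>j. 0 \<le> wf d (\<mu>$j)"
  shows "psd (Gam d H \<psi> \<mu>)"
  unfolding Gam_eq[OF assms(1)]
  by (intro psd_sum psd_scale psd_outer assms(2)) simp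

lemma quad_form:
  fixes L :: "real^'q::finite^'p::finite"
  shows "(\<Sum>k\<in>UNIV. \<Sum>l\<in>UNIV. (L ** transpose L) $ k $ l * outer a $ k $ l) = (norm (transpose L *v a))\<^sup>2"
proof -
  have "(\<Sum>k\<in>UNIV. \<Sum>l\<in>UNIV. (L ** transpose L) $ k $ l * outer a $ k $ l)
     = (\<Sum>k\<in>UNIV. \<Sum>l\<in>UNIV. \<Sum>q\<in>UNIV. L$k$q * a$k * (L$l$q * a$l))"
    by (simp add: outer_def matrix_matrix_mult_def transpose_def sum_distrib_left mult_ac)
  also have "\<dots> = (\<Sum>k\<in>UNIV. \<Sum>q\<in>UNIV. \<Sum>l\<in>UNIV. L$k$q * a$k * (L$l$q * a$l))"
    by (rule sum.cong[OF refl], rule sum.swap)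
  also have "\<dots> = (\<Sum>q\<in>UNIV. \<Sum>k\<in>UNIV. \<Sum>l\<in>UNIV. L$k$q * a$k * (L$l$q * a$l))"
    by (rule sum.swap)
  also have "\<dots> = (\<Sum>q\<in>UNIV. (\<Sum>k\<in>UNIV. L$k$q * a$k) * (\<Sum>l\<in>UNIV. L$l$q * a$l))"
    by (simp add: sum_product)
  also have "\<dots> = (norm (transpose L *v a))\<^sup>2"
    unfolding power2_norm_eq_inner
    by (simp add: inner_vec_def matrix_vector_mult_def transpose_def)
  finally show ?thesis .
qed

lemma wf_deriv:
  assumes "0 < x"
  shows "((\<lambda>t. wf d (x + t * e)) has_field_derivative (- e / x\<^sup>2)) (at 0)"
proof -
  have "((\<lambda>t. inverse (x + t * e)) has_field_derivative (- e / x\<^sup>2)) (at 0)"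
    using assms by (auto intro!: derivative_eq_intros simp: power2_eq_square field_simps)
  note h = this
  show ?thesis
  proof (cases "d = PO_WOR")
    case True
    have "((\<lambda>t. inverse (x + t * e) - 1) has_field_derivative (- e / x\<^sup>2 - 0)) (at 0)"
      by (rule DERIV_diff[OF h DERIV_const])
    then show ?thesis using True by (simp add: wf_def)
  next
    case False
    then show ?thesis using h by (simp add: wf_def)
  qed
qed

lemma f_axis:
  fixes \<mu>s :: "real^'d::finite" and H :: "real^'p::finite^'p"
  assumes A: "transpose (matrix_inv H) = matrix_inv H"
   and pos: "\<And>j. 0 < \<mu>s$j" and le1: "\<And>j. d = PO_WOR \<Longrightarrow> \<mu>s$j \<le> 1"
   and dPhi: "(\<Phi> has_derivative D) (at (Gam d H \<psi> \<mu>s) within {A. psd A})"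
   and df: "((\<lambda>\<mu>. \<Phi> (Gam d H \<psi> \<mu>)) has_derivative f') (at \<mu>s)"
  shows "f' (axis i 1) = D ((- (1/(\<mu>s$i)\<^sup>2)) *\<^sub>R outer (matrix_inv H *v \<psi> i))"
proof -
  define m where "m = \<mu>s$i"
  define e :: "real^'d" where "e = axis i 1"
  define T :: "real set" where "T = {-m/2..0}"
  define P where "P j = outer (matrix_inv H *v \<psi> j)" for j
  define line where "line t = \<mu>s + t *\<^sub>R e" for t
  define G where "G t = Gam d H \<psi> (line t)" for t
  have m: "0 < m" using pos m_def by auto
  have e_nth: "e $ j = (if j = i then 1 else 0)" for j
    by (simp add: e_def axis_def)
  have G_eq: "G = (\<lambda>t. \<Sum>j\<in>UNIV. wf d (\<mu>s$j + t * (e $ j)) *\<^sub>R P j)"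
    by (auto simp: G_def line_def Gam_eq[OF A] P_def fun_eq_iff)
  have "(G has_derivative (\<lambda>t. \<Sum>j\<in>UNIV. ((- (e $ j) / (\<mu>s$j)\<^sup>2) * t) *\<^sub>R P j)) (at 0)"
    unfolding G_eq
    by (intro has_derivative_sum has_derivative_scaleR_left has_field_derivative_imp_has_derivative
        wf_deriv pos)
  moreover have "(\<lambda>t. \<Sum>j\<in>UNIV. ((- (e $ j) / (\<mu>s$j)\<^sup>2) * t) *\<^sub>R P j)
     = (\<lambda>t. t *\<^sub>R ((- (1/m\<^sup>2)) *\<^sub>R P i))"
    by (simp add: e_nth fun_eq_iff if_distrib if_distribR m_def cong: if_cong)
  ultimately have Gd: "(G has_derivative (\<lambda>t. t *\<^sub>R ((- (1/m\<^sup>2)) *\<^sub>R P i))) (at 0 within T)"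
    by (simp add: has_derivative_at_withinI)
  have G0: "G 0 = Gam d H \<psi> \<mu>s" by (simp add: G_def line_def)
  have GT: "G ` T \<subseteq> {A. psd A}"
  proof clarify
    fix t assume t: "t \<in> T"
    show "psd (G t)" unfolding G_def
    proof (rule psd_Gam[OF A], rule wf_nonneg)
      fix j
      show "0 < line t $ j" "d = PO_WOR \<longrightarrow> line t $ j \<le> 1"
        using t m pos[of j] le1[of j] by (auto simp: line_def e_nth T_def m_def)
    qed
  qed
  have c1: "((\<Phi> \<circ> G) has_derivative (D \<circ> (\<lambda>t. t *\<^sub>R ((- (1/m\<^sup>2)) *\<^sub>R P i)))) (at 0 within T)"
    by (rule diff_chain_within[OF Gd]) (use has_derivative_subset[OF dPhi GT] G0 in simp)
  have ld: "(line has_derivative (\<lambda>t. t *\<^sub>R e)) (at 0 within T)"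
    unfolding line_def by (auto intro!: derivative_eq_intros)
  have c2: "(((\<lambda>\<mu>. \<Phi> (Gam d H \<psi> \<mu>)) \<circ> line) has_derivative (f' \<circ> (\<lambda>t. t *\<^sub>R e))) (at 0 within T)"
    by (rule diff_chain_within[OF ld]) (use has_derivative_at_withinI[OF df] in \<open>simp add: line_def\<close>)
  have same: "(\<lambda>\<mu>. \<Phi> (Gam d H \<psi> \<mu>)) \<circ> line = \<Phi> \<circ> G" by (simp add: G_def fun_eq_iff)
  have "f' \<circ> (\<lambda>t. t *\<^sub>R e) = D \<circ> (\<lambda>t. t *\<^sub>R ((- (1/m\<^sup>2)) *\<^sub>R P i))"
  proof (rule frechet_derivative_unique_within_closed_interval[of "-m/2" 0 0])
    show "(\<Phi> \<circ> G has_derivative f' \<circ> (\<lambda>t. t *\<^sub>R e)) (at 0 within cbox (- m / 2) 0)"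
      using c2 same by (simp add: T_def)
    show "(\<Phi> \<circ> G has_derivative D \<circ> (\<lambda>t. t *\<^sub>R ((- (1/m\<^sup>2)) *\<^sub>R P i))) (at 0 within cbox (- m / 2) 0)"
      using c1 by (simp add: T_def)
  qed (use m in auto)
  then have "f' (1 *\<^sub>R e) = D (1 *\<^sub>R ((- (1/m\<^sup>2)) *\<^sub>R P i))"
    by (metis comp_apply)
  then show ?thesis by (simp add: e_def m_def P_def)
qed

lemma convex_tangent:
  fixes f :: "real^'d::finite \<Rightarrow> real"
  assumes conv: "convex_on S f" and x: "x \<in> S" and y: "y \<in> S"
    and df: "(f has_derivative f') (at x)"
  shows "f x + f' (y - x) \<le> f y"
proof -
  define g where "g t = f (x + t *\<^sub>R (y - x))" for t
  have lin: "bounded_linear f'" using df by (rule has_derivative_bounded_linear)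
  have "((\<lambda>t. x + t *\<^sub>R (y - x)) has_derivative (\<lambda>t. t *\<^sub>R (y - x))) (at 0)"
    by (auto intro!: derivative_eq_intros)
  from diff_chain_at[OF this] df
  have "(g has_derivative (f' \<circ> (\<lambda>t. t *\<^sub>R (y - x)))) (at 0)"
    unfolding g_def by (simp add: o_def)
  moreover have "f' \<circ> (\<lambda>t. t *\<^sub>R (y - x)) = (*) (f' (y - x))"
    using lin by (auto simp: fun_eq_iff linear_simps bounded_linear.linear[OF lin] linear_cmul[OF bounded_linear.linear[OF lin]])
  ultimately have "(g has_field_derivative f' (y - x)) (at 0 within {0<..})"
    by (simp add: has_field_derivative_def has_derivative_at_withinI)
  then have lim: "((\<lambda>t. (g t - g 0) / (t - 0)) \<longlongrightarrow> f' (y - x)) (at_right 0)"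
    by (simp add: has_field_derivative_iff)
  have "eventually (\<lambda>t. t \<in> {0<..<1}) (at_right (0::real))"
    by (rule eventually_at_right_real) simp
  then have ev: "eventually (\<lambda>t. (g t - g 0) / (t - 0) \<le> f y - f x) (at_right 0)"
  proof eventually_elim
    case (elim t)
    then have t: "0 < t" "t < 1" by auto
    have "x + t *\<^sub>R (y - x) = (1 - t) *\<^sub>R x + t *\<^sub>R y" by (simp add: algebra_simps)
    then have "g t \<le> (1 - t) * f x + t * f y"
      using convex_onD[OF conv, of t x y] t x y by (simp add: g_def)
    then have "g t - g 0 \<le> t * (f y - f x)" by (simp add: g_def algebra_simps)
    then show ?case using t by (simp add: divide_le_eq mult.commute)
  qed
  have "f' (y - x) \<le> f y - f x"
    by (rule tendsto_upperbound[OF lim ev]) simp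
  then show ?thesis by simp
qed

lemma lin_expand:
  assumes "linear f'"
  shows "f' (x::real^'d::finite) = (\<Sum>i\<in>UNIV. x$i * f' (axis i 1))"
proof -
  have "x = (\<Sum>i\<in>UNIV. x$i *\<^sub>R axis i 1)"
    using basis_expansion[of x] by (simp add: scalar_mult_eq_scaleR)
  then have "f' x = f' (\<Sum>i\<in>UNIV. x$i *\<^sub>R axis i 1)" by simp
  also have "\<dots> = (\<Sum>i\<in>UNIV. x$i * f' (axis i 1))"
    by (simp add: linear_sum[OF assms] linear_cmul[OF assms])
  finally show ?thesis .
qed

theorem proposition1:
  fixes d :: design
    and \<psi> :: "'d::finite \<Rightarrow> real^'p::finite"
    and H :: "real^'p^'p"
    and n :: real
    and \<Phi> :: "real^'p^'p \<Rightarrow> real"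
    and \<phi> :: "real^'p^'p \<Rightarrow> real^'p^'p"
    and \<mu>s :: "real^'d"
    and L :: "real^'q::finite^'p"
    and c :: "'d \<Rightarrow> real"
  assumes H_sym: "transpose H = H"
    and H_inv: "invertible H"
    and n_pos: "0 < n"
    and mono: "loewner_mono \<Phi>"
    and deriv: "\<And>U. psd U \<Longrightarrow> matrix_deriv \<Phi> \<phi> U"
    and mus_in: "\<mu>s \<in> M_dom d n"
    and nbhd: "\<exists>S. open S \<and> \<mu>s \<in> S \<and>
                 (\<forall>\<mu>\<in>S. (\<lambda>\<mu>. \<Phi> (Gam d H \<psi> \<mu>)) differentiable (at \<mu>))"
    and L_fact: "L ** transpose L = \<phi> (Gam d H \<psi> \<mu>s)"
    and c_def: "\<And>i. c i = (norm (transpose L *v (matrix_inv H *v \<psi> i)))\<^sup>2"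
  shows
    "(d \<in> {PO_WR, MULTI} \<longrightarrow>
        (\<forall>i. \<mu>s $ i = n * sqrt (c i) / (\<Sum>j\<in>UNIV. sqrt (c j))) \<longrightarrow>
        lagrange_stationary (\<lambda>\<mu>. \<Phi> (Gam d H \<psi> \<mu>)) \<mu>s)
   \<and> (d = PO_WOR \<longrightarrow>
        (let E = {i. \<mu>s $ i = 1} in
          (\<forall>i. \<mu>s $ i \<le> 1) \<and>
          (\<forall>i\<in>- E. \<mu>s $ i = (n - real (card E)) * sqrt (c i) / (\<Sum>j\<in>- E. sqrt (c j))) \<and>
          (\<forall>i\<in>E. \<forall>j\<in>- E. sqrt (c i) \<ge> sqrt (c j) / \<mu>s $ j)) \<longrightarrow>
        kkt_stationary (\<lambda>\<mu>. \<Phi> (Gam d H \<psi> \<mu>)) n \<mu>s)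
   \<and> (((d \<in> {PO_WR, MULTI} \<and> (\<forall>i. \<mu>s $ i = n * sqrt (c i) / (\<Sum>j\<in>UNIV. sqrt (c j))))
        \<or> (d = PO_WOR \<and>
            (let E = {i. \<mu>s $ i = 1} in
              (\<forall>i. \<mu>s $ i \<le> 1) \<and>
              (\<forall>i\<in>- E. \<mu>s $ i = (n - real (card E)) * sqrt (c i) / (\<Sum>j\<in>- E. sqrt (c j))) \<and>
              (\<forall>i\<in>E. \<forall>j\<in>- E. sqrt (c i) \<ge> sqrt (c j) / \<mu>s $ j))))
       \<longrightarrow> convex_on (M_dom d n) (\<lambda>\<mu>. \<Phi> (Gam d H \<psi> \<mu>))
       \<longrightarrow> (\<forall>\<mu>\<in>M_dom d n. \<Phi> (Gam d H \<psi> \<mu>s) \<le> \<Phi> (Gam d H \<psi> \<mu>)))"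
proof -
  note As = inv_sym[OF H_sym H_inv]
  let ?f = "\<lambda>\<mu>. \<Phi> (Gam d H \<psi> \<mu>)"
  have pos: "\<And>j. 0 < \<mu>s$j" and le1: "\<And>j. d = PO_WOR \<Longrightarrow> \<mu>s$j \<le> 1"
    and sumn: "(\<Sum>i\<in>UNIV. \<mu>s$i) = n"
    using mus_in by (auto simp: M_dom_def)
  have psdG: "psd (Gam d H \<psi> \<mu>s)"
    by (rule psd_Gam[OF As(1)]) (use pos le1 in \<open>auto intro!: wf_nonneg\<close>)
  define D where "D W = (\<Sum>k\<in>UNIV. \<Sum>l\<in>UNIV. \<phi> (Gam d H \<psi> \<mu>s) $ k $ l * W $ k $ l)" for W
  have dPhi: "(\<Phi> has_derivative D) (at (Gam d H \<psi> \<mu>s) within {A. psd A})"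
    using deriv[OF psdG] unfolding matrix_deriv_def D_def .
  obtain f' where df: "(?f has_derivative f') (at \<mu>s)"
    using nbhd by (metis differentiable_def)
  have lin: "linear f'" using df by (rule has_derivative_linear)
  have c_nn: "\<And>i. 0 \<le> c i" by (simp add: c_def)
  have fax: "f' (axis i 1) = - c i / (\<mu>s$i)\<^sup>2" for i
  proof -
    have "f' (axis i 1) = D ((- (1/(\<mu>s$i)\<^sup>2)) *\<^sub>R outer (matrix_inv H *v \<psi> i))"
      by (rule f_axis[OF As(1) pos le1 dPhi df])
    also have "\<dots> = (- (1/(\<mu>s$i)\<^sup>2)) * (\<Sum>k\<in>UNIV. \<Sum>l\<in>UNIV. (L ** transpose L)$k$l * outer (matrix_inv H *v \<psi> i) $k$l)"
      by (simp add: D_def L_fact sum_distrib_left mult_ac)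
    also have "\<dots> = - c i / (\<mu>s$i)\<^sup>2" by (simp add: quad_form c_def)
    finally show ?thesis .
  qed
  have glob: "\<forall>\<mu>\<in>M_dom d n. ?f \<mu>s \<le> ?f \<mu>"
    if kk: "\<And>i. 0 \<le> \<nu> i \<and> \<nu> i * (\<mu>s$i - 1) = 0 \<and> f' (axis i 1) + lam + \<nu> i = 0"
      and nz: "\<And>i. \<nu> i \<noteq> 0 \<Longrightarrow> d = PO_WOR"
      and cv: "convex_on (M_dom d n) ?f" for lam \<nu>
  proof
    fix \<mu> :: "real^'d" assume \<mu>: "\<mu> \<in> M_dom d n"
    have le1': "\<And>j. d = PO_WOR \<Longrightarrow> \<mu>$j \<le> 1" and sumn': "(\<Sum>i\<in>UNIV. \<mu>$i) = n"
      using \<mu> by (auto simp: M_dom_def)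
    have fe: "f' (axis i 1) = - lam - \<nu> i" for i using kk[of i] by linarith
    have "f' (\<mu> - \<mu>s) = (\<Sum>i\<in>UNIV. (\<mu>$i - \<mu>s$i) * (- lam - \<nu> i))"
      by (subst lin_expand[OF lin]) (simp add: fe)
    also have "\<dots> = - lam * ((\<Sum>i\<in>UNIV. \<mu>$i) - (\<Sum>i\<in>UNIV. \<mu>s$i)) - (\<Sum>i\<in>UNIV. (\<mu>$i - \<mu>s$i) * \<nu> i)"
      by (simp add: algebra_simps sum.distrib sum_subtractf[symmetric] sum_distrib_left sum_negf)
    also have "\<dots> = - (\<Sum>i\<in>UNIV. (\<mu>$i - \<mu>s$i) * \<nu> i)" using sumn sumn' by simp
    also have "\<dots> \<ge> 0"
    proof -
      have "(\<mu>$i - \<mu>s$i) * \<nu> i \<le> 0" for i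
      proof (cases "\<nu> i = 0")
        case False
        then have "\<mu>s$i = 1" "d = PO_WOR" using kk[of i] nz[of i] by auto
        then show ?thesis using le1'[of i] kk[of i] by (simp add: mult_nonpos_nonneg)
      qed simp
      then show ?thesis by (simp add: sum_nonpos)
    qed
    finally have "0 \<le> f' (\<mu> - \<mu>s)" .
    moreover have "?f \<mu>s + f' (\<mu> - \<mu>s) \<le> ?f \<mu>"
      by (rule convex_tangent[OF cv mus_in \<mu> df])
    ultimately show "?f \<mu>s \<le> ?f \<mu>" by linarith
  qed
  have caseA: "\<exists>lam. \<forall>i. f' (axis i 1) + lam = 0"
    if h: "\<forall>i. \<mu>s $ i = n * sqrt (c i) / (\<Sum>j\<in>UNIV. sqrt (c j))"
  proof -
    define S where "S = (\<Sum>j\<in>UNIV. sqrt (c j))"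
    have S0: "S \<noteq> 0"
    proof
      assume "S = 0"
      then have "\<mu>s $ i = 0" for i using h by (simp add: S_def)
      then show False using pos by (metis less_irrefl)
    qed
    have "f' (axis i 1) + S\<^sup>2 / n\<^sup>2 = 0" for i
    proof -
      have r: "sqrt (c i) = \<mu>s$i * S / n" using h[rule_format, of i] S0 n_pos
        by (simp add: S_def field_simps)
      have "c i = (\<mu>s$i * S / n)\<^sup>2" using r c_nn[of i] by (metis real_sqrt_pow2)
      then show ?thesis using pos[of i] n_pos by (simp add: fax field_simps power2_eq_square)
    qed
    then show ?thesis by blast
  qed
  have caseB: "\<exists>lam \<nu>. \<forall>i. 0 \<le> \<nu> i \<and> \<nu> i * (\<mu>s$i - 1) = 0 \<and> f' (axis i 1) + lam + \<nu> i = 0"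
    if h: "let E = {i. \<mu>s $ i = 1} in
          (\<forall>i. \<mu>s $ i \<le> 1) \<and>
          (\<forall>i\<in>- E. \<mu>s $ i = (n - real (card E)) * sqrt (c i) / (\<Sum>j\<in>- E. sqrt (c j))) \<and>
          (\<forall>i\<in>E. \<forall>j\<in>- E. sqrt (c i) \<ge> sqrt (c j) / \<mu>s $ j)"
  proof -
    define E where "E = {i. \<mu>s $ i = 1}"
    define K where "K = (n - real (card E)) / (\<Sum>j\<in>- E. sqrt (c j))"
    have h2: "\<And>i. i \<notin> E \<Longrightarrow> \<mu>s $ i = K * sqrt (c i)"
      using h unfolding Let_def E_def[symmetric] K_def by auto
    have h3: "\<And>i j. i \<in> E \<Longrightarrow> j \<notin> E \<Longrightarrow> sqrt (c i) \<ge> sqrt (c j) / \<mu>s $ j"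
      using h unfolding Let_def E_def[symmetric] by (meson ComplI)
    define lam where "lam = inverse (K\<^sup>2)"
    define \<nu> where "\<nu> i = (if i \<in> E then c i - lam else 0)" for i
    have Kpos: "0 < K" if "j \<notin> E" for j
    proof -
      have "0 < K * sqrt (c j)" using h2[OF that] pos[of j] by simp
      then show ?thesis using c_nn[of j] by (simp add: zero_less_mult_iff)
    qed
    have sqpos: "0 < sqrt (c j)" if "j \<notin> E" for j
      using h2[OF that] Kpos[OF that] pos[of j] by (simp add: zero_less_mult_iff)
    have nonE: "c j / (\<mu>s$j)\<^sup>2 = lam" if "j \<notin> E" for j
    proof -
      have sq: "0 < sqrt (c j)" by (rule sqpos[OF that])
      have "c j / (\<mu>s$j)\<^sup>2 = (sqrt (c j))\<^sup>2 / (K * sqrt (c j))\<^sup>2"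
        using c_nn[of j] h2[OF that] by simp
      also have "\<dots> = inverse (K\<^sup>2)" using sq Kpos[OF that]
        by (simp add: power_mult_distrib field_simps)
      finally show ?thesis by (simp add: lam_def)
    qed
    have inE: "lam \<le> c i" if "i \<in> E" for i
    proof (cases "- E = {}")
      case True
      then have "K = 0" by (simp add: K_def)
      then show ?thesis using c_nn[of i] by (simp add: lam_def)
    next
      case False
      then obtain j where j: "j \<notin> E" by auto
      have "sqrt (c j) / \<mu>s $ j = 1 / K"
        using h2[OF j] Kpos[OF j] sqpos[OF j] by (simp add: field_simps)
      then have "1 / K \<le> sqrt (c i)" using h3[OF that j] by simp
      then have "(1/K)\<^sup>2 \<le> (sqrt (c i))\<^sup>2"
        using Kpos[OF j] by (intro power_mono) auto
      then show ?thesis using c_nn[of i] by (simp add: lam_def power_one_over inverse_eq_divide)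
    qed
    have "\<forall>i. 0 \<le> \<nu> i \<and> \<nu> i * (\<mu>s$i - 1) = 0 \<and> f' (axis i 1) + lam + \<nu> i = 0"
    proof
      fix i show "0 \<le> \<nu> i \<and> \<nu> i * (\<mu>s$i - 1) = 0 \<and> f' (axis i 1) + lam + \<nu> i = 0"
      proof (cases "i \<in> E")
        case True
        then have "\<mu>s$i = 1" by (simp add: E_def)
        then show ?thesis using True inE[OF True] by (simp add: \<nu>_def fax)
      next
        case False
        then show ?thesis using nonE[OF False] by (simp add: \<nu>_def fax)
      qed
    qed
    then show ?thesis by blast
  qed
  show ?thesis
  proof (intro conjI impI)
    assume "\<forall>i. \<mu>s $ i = n * sqrt (c i) / (\<Sum>j\<in>UNIV. sqrt (c j))"
    then show "lagrange_stationary ?f \<mu>s"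
      using caseA df unfolding lagrange_stationary_def by blast
  next
    assume "d = PO_WOR" and hb: "let E = {i. \<mu>s $ i = 1} in
          (\<forall>i. \<mu>s $ i \<le> 1) \<and>
          (\<forall>i\<in>- E. \<mu>s $ i = (n - real (card E)) * sqrt (c i) / (\<Sum>j\<in>- E. sqrt (c j))) \<and>
          (\<forall>i\<in>E. \<forall>j\<in>- E. sqrt (c i) \<ge> sqrt (c j) / \<mu>s $ j)"
    then show "kkt_stationary ?f n \<mu>s"
      using caseB[OF hb] df sumn le1 unfolding kkt_stationary_def by blast
  next
    assume hc: "(d \<in> {PO_WR, MULTI} \<and> (\<forall>i. \<mu>s $ i = n * sqrt (c i) / (\<Sum>j\<in>UNIV. sqrt (c j))))
        \<or> (d = PO_WOR \<and>
            (let E = {i. \<mu>s $ i = 1} in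
              (\<forall>i. \<mu>s $ i \<le> 1) \<and>
              (\<forall>i\<in>- E. \<mu>s $ i = (n - real (card E)) * sqrt (c i) / (\<Sum>j\<in>- E. sqrt (c j))) \<and>
              (\<forall>i\<in>E. \<forall>j\<in>- E. sqrt (c i) \<ge> sqrt (c j) / \<mu>s $ j)))"
      and cv: "convex_on (M_dom d n) ?f"
    show "\<forall>\<mu>\<in>M_dom d n. ?f \<mu>s \<le> ?f \<mu>"
      using hc
    proof (elim disjE conjE)
      assume "\<forall>i. \<mu>s $ i = n * sqrt (c i) / (\<Sum>j\<in>UNIV. sqrt (c j))"
      then obtain lam where "\<forall>i. f' (axis i 1) + lam = 0" using caseA by blast
      then show ?thesis using glob[of "\<lambda>_. 0" lam] cv by simp
    next
      assume w: "d = PO_WOR" and hb: "let E = {i. \<mu>s $ i = 1} in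
              (\<forall>i. \<mu>s $ i \<le> 1) \<and>
              (\<forall>i\<in>- E. \<mu>s $ i = (n - real (card E)) * sqrt (c i) / (\<Sum>j\<in>- E. sqrt (c j))) \<and>
              (\<forall>i\<in>E. \<forall>j\<in>- E. sqrt (c i) \<ge> sqrt (c j) / \<mu>s $ j)"
      obtain lam \<nu> where "\<forall>i. 0 \<le> \<nu> i \<and> \<nu> i * (\<mu>s$i - 1) = 0 \<and> f' (axis i 1) + lam + \<nu> i = 0"
        using caseB[OF hb] by blast
      then show ?thesis using glob[of \<nu> lam] cv w by blast
    qed
  qed
qed

end
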